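(* Let $W:\{0,1\}\to\mathcal{Y}$ and $V:\{0,1\}\to\mathcal{Z}$ be two binary-input discrete memoryless channels such that $\lvert\Delta_{V}\rvert \prec_{icx} \lvert\Delta_{W}\rvert$. Then $\lvert\Delta_{V^-}\rvert \prec_{icx} \lvert\Delta_{W^-}\rvert$ and $\lvert\Delta_{V^+}\rvert \prec_{icx} \lvert\Delta_{W^+}\rvert$.
   Context: For a binary-input discrete memoryless channel (B-DMC) $W:\{0,1\}\to\mathcal{Y}$ with transition probabilities $W(y|x)$, let $q_W(y)=\tfrac12\big(W(y|0)+W(y|1)\big)$ and, for $y$ with $q_W(y)>0$, $\Delta_W(y)=\frac{W(y|0)-W(y|1)}{W(y|0)+W(y|1)}$. With $Y\sim q_W$ (uniform input), $\Delta_W$ denotes the random variable $\Delta_W(Y)\in[-1,1]$ and $\lvert\Delta_W\rvert$ its absolute value. Ar\i kan's polarization transforms synthesize from two independent copies of $W$ the channels $W^-:\{0,1\}\to\mathcal{Y}^2$ and $W^+:\{0,1\}\to\mathcal{Y}^2\times\{0,1\}$ with $W^-(y_1y_2|u_1)=\sum_{u_2\in\{0,1\}}\tfrac12 W(y_1|u_1\oplus u_2)W(y_2|u_2)$ and $W^+(y_1y_2u_1|u_2)=\tfrac12 W(y_1|u_1\oplus u_2)W(y_2|u_2)$. For real random variables $X,Y$, $X\prec_{icx}Y$ (increasing convex order) means $\mathbb{E}[\phi(X)]\le\mathbb{E}[\phi(Y)]$ for all increasing convex functions $\phi$ for which the expectations exist. *)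

theory Defs
  imports "HOL-Analysis.Analysis"
begin

(* Binary input alphabet {0,1} is rendered as bool (False = 0, True = 1);
   xor u1 \<oplus> u2 is (u1 \<noteq> u2).  Output alphabets are finite types. *)

definition bdmc :: "(bool \<Rightarrow> 'y::finite \<Rightarrow> real) \<Rightarrow> bool" where
  "bdmc W \<longleftrightarrow> (\<forall>x y. 0 \<le> W x y) \<and> (\<forall>x. (\<Sum>y\<in>UNIV. W x y) = 1)"

definition qW :: "(bool \<Rightarrow> 'y \<Rightarrow> real) \<Rightarrow> 'y \<Rightarrow> real" where
  "qW W y = (W False y + W True y) / 2"

definition DeltaW :: "(bool \<Rightarrow> 'y \<Rightarrow> real) \<Rightarrow> 'y \<Rightarrow> real" where
  "DeltaW W y = (W False y - W True y) / (W False y + W True y)"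

(* E[phi(|Delta_W|)] with Y ~ q_W; outputs with q_W(y) = 0 carry weight 0 *)
definition exp_absDelta :: "(bool \<Rightarrow> 'y::finite \<Rightarrow> real) \<Rightarrow> (real \<Rightarrow> real) \<Rightarrow> real" where
  "exp_absDelta W \<phi> = (\<Sum>y\<in>UNIV. qW W y * \<phi> \<bar>DeltaW W y\<bar>)"

definition absDelta_icx ::
  "(bool \<Rightarrow> 'z::finite \<Rightarrow> real) \<Rightarrow> (bool \<Rightarrow> 'y::finite \<Rightarrow> real) \<Rightarrow> bool" where
  "absDelta_icx V W \<longleftrightarrow>
     (\<forall>\<phi>::real \<Rightarrow> real. mono \<phi> \<and> convex_on UNIV \<phi> \<longrightarrow> exp_absDelta V \<phi> \<le> exp_absDelta W \<phi>)"

definition chan_minus :: "(bool \<Rightarrow> 'y \<Rightarrow> real) \<Rightarrow> bool \<Rightarrow> 'y \<times> 'y \<Rightarrow> real" where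
  "chan_minus W u1 yy = (\<Sum>u2\<in>UNIV. (1/2) * W (u1 \<noteq> u2) (fst yy) * W u2 (snd yy))"

definition chan_plus :: "(bool \<Rightarrow> 'y \<Rightarrow> real) \<Rightarrow> bool \<Rightarrow> ('y \<times> 'y) \<times> bool \<Rightarrow> real" where
  "chan_plus W u2 yyu = (1/2) * W (snd yyu \<noteq> u2) (fst (fst yyu)) * W u2 (snd (fst yyu))"

end

theory Submission
  imports Defs
begin


lemma three_slope:
  fixes h :: "real \<Rightarrow> real"
  assumes "convex_on {0..1} h" "a \<in> {0..1}" "b \<in> {0..1}" "a < p" "p < b"
  shows "(h p - h a) / (p - a) \<le> (h b - h p) / (b - p)"
proof -
  have 1: "(h a - h p) / (a - p) \<le> (h a - h b) / (a - b)"
   and 2: "(h a - h b) / (a - b) \<le> (h p - h b) / (p - b)"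
    using convex_on_slope_le[OF assms(1,2,3,4,5)] by auto
  have "(h p - h a) / (p - a) = (h a - h p) / (a - p)"
    by (simp add: divide_simps; argo)
  moreover have "(h b - h p) / (b - p) = (h p - h b) / (p - b)"
    by (simp add: divide_simps; argo)
  ultimately show ?thesis using 1 2 by linarith
qed

lemma ext_finite:
  fixes h :: "real \<Rightarrow> real" and S :: "real set"
  assumes fin: "finite S" and sub: "S \<subseteq> {0..1}" and ne: "S \<noteq> {}"
    and cv: "convex_on {0..1} h" and mo: "mono_on {0..1} h"
  shows "\<exists>\<psi>. mono \<psi> \<and> convex_on UNIV \<psi> \<and> (\<forall>p\<in>S. \<psi> p = h p)"
proof -
  define c where "c p = Max (insert 0 ((\<lambda>q. (h p - h q)/(p-q)) ` {q\<in>S. q<p}))" for p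
  have c0: "0 \<le> c p" for p unfolding c_def using fin by (intro Max_ge) auto
  have cl: "(h p - h q)/(p-q) \<le> c p" if "q \<in> S" "q < p" for p q
    unfolding c_def using fin that by (intro Max_ge) auto
  have cr: "c p \<le> (h q - h p)/(q-p)" if "p \<in> S" "q \<in> S" "p < q" for p q
  proof -
    have "h p \<le> h q" using mo that sub by (meson mono_onD subsetD less_imp_le)
    then have "0 \<le> (h q - h p)/(q-p)"
      using that by (auto intro!: divide_nonneg_pos)
    moreover have "(h p - h r)/(p-r) \<le> (h q - h p)/(q-p)" if "r \<in> S" "r < p" for r
    proof -
      have "r \<in> {0..1}" "q \<in> {0..1}" using that \<open>q \<in> S\<close> sub by auto
      then show ?thesis
        using three_slope[OF cv, of r q p] that \<open>p < q\<close> by auto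
    qed
    ultimately show ?thesis unfolding c_def using fin
      by (subst Max_le_iff) auto
  qed
  have key: "h p + c p * (q - p) \<le> h q" if "p \<in> S" "q \<in> S" for p q
  proof (cases q p rule: linorder_cases)
    case less
    have "(h p - h q)/(p-q) * (p - q) \<le> c p * (p - q)"
      using cl[OF that(2) less] less by (intro mult_right_mono) auto
    moreover have "(h p - h q)/(p-q) * (p - q) = h p - h q" using less by simp
    ultimately show ?thesis by (simp add: algebra_simps)
  next
    case equal then show ?thesis by simp
  next
    case greater
    have "c p * (q - p) \<le> (h q - h p)/(q-p) * (q - p)"
      using cr[OF that greater] greater by (intro mult_right_mono) auto
    moreover have "(h q - h p)/(q-p) * (q - p) = h q - h p" using greater by simp
    ultimately show ?thesis by (simp add: algebra_simps)
  qed
  define \<psi> where "\<psi> x = Max ((\<lambda>p. h p + c p * (x - p)) ` S)" for x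
  have le\<psi>: "h p + c p * (x - p) \<le> \<psi> x" if "p \<in> S" for p x
    unfolding \<psi>_def using fin that by (intro Max_ge) auto
  have \<psi>le: "\<psi> x \<le> B" if "\<And>p. p \<in> S \<Longrightarrow> h p + c p * (x - p) \<le> B" for x B
    unfolding \<psi>_def using fin ne that by (subst Max_le_iff) auto
  have "mono \<psi>"
  proof (rule monoI)
    fix x y :: real assume "x \<le> y"
    show "\<psi> x \<le> \<psi> y"
    proof (rule \<psi>le)
      fix p assume p: "p \<in> S"
      have "h p + c p * (x - p) \<le> h p + c p * (y - p)"
        using c0[of p] \<open>x \<le> y\<close> by (simp add: mult_left_mono)
      also have "\<dots> \<le> \<psi> y" by (rule le\<psi>[OF p])
      finally show "h p + c p * (x - p) \<le> \<psi> y" .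
    qed
  qed
  moreover have "convex_on UNIV \<psi>"
  proof (rule convex_onI)
    fix t x y :: real assume t: "0 < t" "t < 1"
    show "\<psi> ((1 - t) *\<^sub>R x + t *\<^sub>R y) \<le> (1 - t) * \<psi> x + t * \<psi> y"
    proof (rule \<psi>le)
      fix p assume p: "p \<in> S"
      have "h p + c p * ((1 - t) *\<^sub>R x + t *\<^sub>R y - p)
           = (1 - t) * (h p + c p * (x - p)) + t * (h p + c p * (y - p))"
        by (simp add: algebra_simps)
      also have "\<dots> \<le> (1 - t) * \<psi> x + t * \<psi> y"
        using t le\<psi>[OF p, of x] le\<psi>[OF p, of y]
        by (intro add_mono mult_left_mono) auto
      finally show "h p + c p * ((1 - t) *\<^sub>R x + t *\<^sub>R y - p) \<le> (1 - t) * \<psi> x + t * \<psi> y" .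
    qed
  qed auto
  moreover have "\<forall>p\<in>S. \<psi> p = h p"
  proof
    fix p assume p: "p \<in> S"
    have "\<psi> p \<le> h p" by (rule \<psi>le) (use key p in auto)
    moreover have "h p \<le> \<psi> p" using le\<psi>[OF p, of p] by simp
    ultimately show "\<psi> p = h p" by simp
  qed
  ultimately show ?thesis by blast
qed



lemma bdmc_nonneg: "bdmc W \<Longrightarrow> 0 \<le> W x y" by (simp add: bdmc_def)

lemma qW_nonneg: "bdmc W \<Longrightarrow> 0 \<le> qW W y"
  using bdmc_nonneg[of W] by (simp add: qW_def)

lemma absDelta_le1: assumes "bdmc W" shows "\<bar>DeltaW W y\<bar> \<le> 1"
proof -
  have a: "0 \<le> W False y" "0 \<le> W True y" using assms by (auto simp: bdmc_nonneg)
  show ?thesis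
  proof (cases "W False y + W True y = 0")
    case True then show ?thesis by (simp add: DeltaW_def)
  next
    case False
    then have "W False y + W True y > 0" using a by linarith
    then show ?thesis using a by (simp add: DeltaW_def abs_le_iff divide_le_eq_1 field_simps)
  qed
qed

lemma icx_apply:
  fixes h :: "real \<Rightarrow> real" and W :: "bool \<Rightarrow> 'y::finite \<Rightarrow> real" and V :: "bool \<Rightarrow> 'z::finite \<Rightarrow> real"
  assumes W: "bdmc W" and V: "bdmc V" and icx: "absDelta_icx V W"
    and cv: "convex_on {0..1} h" and mo: "mono_on {0..1} h"
  shows "(\<Sum>z\<in>UNIV. qW V z * h \<bar>DeltaW V z\<bar>) \<le> (\<Sum>y\<in>UNIV. qW W y * h \<bar>DeltaW W y\<bar>)"
proof -
  define S where "S = insert 0 (range (\<lambda>z. \<bar>DeltaW V z\<bar>) \<union> range (\<lambda>y. \<bar>DeltaW W y\<bar>))"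
  have "finite S" unfolding S_def by simp
  moreover have "S \<subseteq> {0..1}" unfolding S_def using absDelta_le1[OF W] absDelta_le1[OF V] by auto
  moreover have "S \<noteq> {}" unfolding S_def by simp
  ultimately obtain \<psi> where \<psi>: "mono \<psi>" "convex_on UNIV \<psi>" "\<forall>p\<in>S. \<psi> p = h p"
    using ext_finite[OF _ _ _ cv mo] by blast
  have "exp_absDelta V \<psi> \<le> exp_absDelta W \<psi>" using icx \<psi> by (simp add: absDelta_icx_def)
  moreover have "exp_absDelta V \<psi> = (\<Sum>z\<in>UNIV. qW V z * h \<bar>DeltaW V z\<bar>)"
    unfolding exp_absDelta_def using \<psi>(3) by (intro sum.cong) (auto simp: S_def)
  moreover have "exp_absDelta W \<psi> = (\<Sum>y\<in>UNIV. qW W y * h \<bar>DeltaW W y\<bar>)"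
    unfolding exp_absDelta_def using \<psi>(3) by (intro sum.cong) (auto simp: S_def)
  ultimately show ?thesis by simp
qed

lemma icx_prod:
  fixes F :: "real \<Rightarrow> real \<Rightarrow> real" and W :: "bool \<Rightarrow> 'y::finite \<Rightarrow> real" and V :: "bool \<Rightarrow> 'z::finite \<Rightarrow> real"
  assumes W: "bdmc W" and V: "bdmc V" and icx: "absDelta_icx V W"
    and F1: "\<And>t. t \<in> {0..1} \<Longrightarrow> convex_on {0..1} (\<lambda>s. F s t) \<and> mono_on {0..1} (\<lambda>s. F s t)"
    and F2: "\<And>s. s \<in> {0..1} \<Longrightarrow> convex_on {0..1} (\<lambda>t. F s t) \<and> mono_on {0..1} (\<lambda>t. F s t)"
  shows "(\<Sum>z1\<in>UNIV. \<Sum>z2\<in>UNIV. qW V z1 * qW V z2 * F \<bar>DeltaW V z1\<bar> \<bar>DeltaW V z2\<bar>)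
       \<le> (\<Sum>y1\<in>UNIV. \<Sum>y2\<in>UNIV. qW W y1 * qW W y2 * F \<bar>DeltaW W y1\<bar> \<bar>DeltaW W y2\<bar>)"
proof -
  have "(\<Sum>z1\<in>UNIV. \<Sum>z2\<in>UNIV. qW V z1 * qW V z2 * F \<bar>DeltaW V z1\<bar> \<bar>DeltaW V z2\<bar>)
      = (\<Sum>z2\<in>UNIV. qW V z2 * (\<Sum>z1\<in>UNIV. qW V z1 * F \<bar>DeltaW V z1\<bar> \<bar>DeltaW V z2\<bar>))"
    unfolding sum_distrib_left by (subst sum.swap) (simp add: mult_ac)
  also have "\<dots> \<le> (\<Sum>z2\<in>UNIV. qW V z2 * (\<Sum>y1\<in>UNIV. qW W y1 * F \<bar>DeltaW W y1\<bar> \<bar>DeltaW V z2\<bar>))"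
  proof (intro sum_mono mult_left_mono)
    fix z2
    have "\<bar>DeltaW V z2\<bar> \<in> {0..1}" using absDelta_le1[OF V] by auto
    from F1[OF this] show "(\<Sum>z1\<in>UNIV. qW V z1 * F \<bar>DeltaW V z1\<bar> \<bar>DeltaW V z2\<bar>)
         \<le> (\<Sum>y1\<in>UNIV. qW W y1 * F \<bar>DeltaW W y1\<bar> \<bar>DeltaW V z2\<bar>)"
      using icx_apply[OF W V icx, of "\<lambda>s. F s \<bar>DeltaW V z2\<bar>"] by blast
  qed (simp add: qW_nonneg[OF V])
  also have "\<dots> = (\<Sum>y1\<in>UNIV. qW W y1 * (\<Sum>z2\<in>UNIV. qW V z2 * F \<bar>DeltaW W y1\<bar> \<bar>DeltaW V z2\<bar>))"
    unfolding sum_distrib_left by (subst sum.swap) (simp add: mult_ac)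
  also have "\<dots> \<le> (\<Sum>y1\<in>UNIV. qW W y1 * (\<Sum>y2\<in>UNIV. qW W y2 * F \<bar>DeltaW W y1\<bar> \<bar>DeltaW W y2\<bar>))"
  proof (intro sum_mono mult_left_mono)
    fix y1
    have "\<bar>DeltaW W y1\<bar> \<in> {0..1}" using absDelta_le1[OF W] by auto
    from F2[OF this] show "(\<Sum>z2\<in>UNIV. qW V z2 * F \<bar>DeltaW W y1\<bar> \<bar>DeltaW V z2\<bar>)
         \<le> (\<Sum>y2\<in>UNIV. qW W y2 * F \<bar>DeltaW W y1\<bar> \<bar>DeltaW W y2\<bar>)"
      using icx_apply[OF W V icx, of "\<lambda>t. F \<bar>DeltaW W y1\<bar> t"] by blast
  qed (simp add: qW_nonneg[OF W])
  also have "\<dots> = (\<Sum>y1\<in>UNIV. \<Sum>y2\<in>UNIV. qW W y1 * qW W y2 * F \<bar>DeltaW W y1\<bar> \<bar>DeltaW W y2\<bar>)"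
    by (simp add: sum_distrib_left mult_ac)
  finally show ?thesis .
qed

lemma minus_formula:
  fixes W :: "bool \<Rightarrow> 'y::finite \<Rightarrow> real"
  shows "exp_absDelta (chan_minus W) \<phi> =
    (\<Sum>y1\<in>UNIV. \<Sum>y2\<in>UNIV. qW W y1 * qW W y2 * \<phi> (\<bar>DeltaW W y1\<bar> * \<bar>DeltaW W y2\<bar>))"
proof -
  have q: "qW (chan_minus W) (y1, y2) = qW W y1 * qW W y2" for y1 y2
    by (simp add: qW_def chan_minus_def UNIV_bool algebra_simps)
  have d: "DeltaW (chan_minus W) (y1, y2) = DeltaW W y1 * DeltaW W y2" for y1 y2
  proof -
    have n: "chan_minus W False (y1, y2) - chan_minus W True (y1, y2) =
        (1/2) * ((W False y1 - W True y1) * (W False y2 - W True y2))"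
      unfolding chan_minus_def UNIV_bool by (simp add: algebra_simps)
    have e: "chan_minus W False (y1, y2) + chan_minus W True (y1, y2) =
        (1/2) * ((W False y1 + W True y1) * (W False y2 + W True y2))"
      unfolding chan_minus_def UNIV_bool by (simp add: algebra_simps)
    have "DeltaW (chan_minus W) (y1, y2) =
      ((W False y1 - W True y1) * (W False y2 - W True y2)) / ((W False y1 + W True y1) * (W False y2 + W True y2))"
      unfolding DeltaW_def n e by simp
    then show ?thesis by (simp add: DeltaW_def)
  qed
  show ?thesis unfolding exp_absDelta_def
    by (simp add: UNIV_Times_UNIV[symmetric] sum.cartesian_product del: UNIV_Times_UNIV)
       (rule sum.cong, auto simp: q d abs_mult)
qed



definition P :: "(real \<Rightarrow> real) \<Rightarrow> real \<Rightarrow> real \<Rightarrow> real" where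
  "P \<phi> x y = y * \<phi> (x / y)"

definition gp :: "(real \<Rightarrow> real) \<Rightarrow> real \<Rightarrow> real \<Rightarrow> real" where
  "gp \<phi> s t = (P \<phi> \<bar>s + t\<bar> (1 + s * t) + P \<phi> \<bar>s - t\<bar> (1 - s * t)) / 2"

lemma P_mono:
  assumes "mono \<phi>" "0 \<le> y" "x \<le> x'"
  shows "P \<phi> x y \<le> P \<phi> x' y"
proof (cases "y = 0")
  case False
  then have "x / y \<le> x' / y" using assms by (simp add: divide_right_mono)
  then have "\<phi> (x / y) \<le> \<phi> (x' / y)" using assms(1) by (simp add: monoD)
  then show ?thesis unfolding P_def using assms(2) by (simp add: mult_left_mono)
qed (simp add: P_def)

lemma P_convex:
  assumes cv: "convex_on UNIV \<phi>" and uv: "0 \<le> u" "0 \<le> v" "u + v = 1"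
    and y: "0 \<le> y1" "0 \<le> y2" "y1 = 0 \<Longrightarrow> x1 = 0" "y2 = 0 \<Longrightarrow> x2 = 0"
  shows "P \<phi> (u * x1 + v * x2) (u * y1 + v * y2) \<le> u * P \<phi> x1 y1 + v * P \<phi> x2 y2"
proof -
  consider "y1 = 0" | "y2 = 0" | "y1 > 0" "y2 > 0" using y by linarith
  then show ?thesis
  proof cases
    case 1
    then show ?thesis using y by (cases "v = 0") (auto simp: P_def)
  next
    case 2
    then show ?thesis using y by (cases "u = 0") (auto simp: P_def)
  next
    case 3
    define Y where "Y = u * y1 + v * y2"
    have Y: "Y > 0" unfolding Y_def using 3 uv
      by (smt (verit) mult_pos_pos mult_nonneg_nonneg)
    define l where "l = u * y1 / Y"
    define m where "m = v * y2 / Y"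
    have lm: "0 \<le> l" "0 \<le> m" "l + m = 1"
      unfolding l_def m_def using Y uv 3 by (auto simp: Y_def add_divide_distrib[symmetric])
    have arg: "(u * x1 + v * x2) / Y = l * (x1 / y1) + m * (x2 / y2)"
      unfolding l_def m_def using 3 Y by (simp add: field_simps)
    have "\<phi> (l * (x1 / y1) + m * (x2 / y2)) \<le> l * \<phi> (x1 / y1) + m * \<phi> (x2 / y2)"
    proof -
      have "\<phi> ((1 - m) *\<^sub>R (x1/y1) + m *\<^sub>R (x2/y2)) \<le> (1 - m) * \<phi> (x1/y1) + m * \<phi> (x2/y2)"
        using convex_onD[OF cv, of m "x1/y1" "x2/y2"] lm by simp
      moreover have "l = 1 - m" using lm by simp
      ultimately show ?thesis by simp
    qed
    then have "Y * \<phi> ((u * x1 + v * x2) / Y) \<le> Y * (l * \<phi> (x1 / y1) + m * \<phi> (x2 / y2))"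
      using Y arg by (simp add: mult_left_mono)
    also have "\<dots> = u * (y1 * \<phi> (x1 / y1)) + v * (y2 * \<phi> (x2 / y2))"
      unfolding l_def m_def using Y by (simp add: field_simps)
    finally show ?thesis unfolding P_def Y_def .
  qed
qed

lemma prod_eq1: "0 \<le> (s::real) \<Longrightarrow> s \<le> 1 \<Longrightarrow> 0 \<le> t \<Longrightarrow> t \<le> 1 \<Longrightarrow> 1 - s * t = 0 \<Longrightarrow> s = 1 \<and> t = 1"
proof -
  assume a: "0 \<le> s" "s \<le> 1" "0 \<le> t" "t \<le> 1" "1 - s * t = 0"
  have "s * t \<le> s * 1" by (rule mult_left_mono[OF a(4) a(1)])
  moreover have "s * t \<le> 1 * t" using a(2) a(3) by (rule mult_right_mono)
  ultimately show ?thesis using a by simp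
qed

lemma lin_avg: "(1 - l) * ((a + b) / 2) + l * ((c + d) / 2) = (((1 - l) * a + l * c) + ((1 - l) * b + l * d)) / (2::real)"
  by (simp add: field_simps)

lemma half_cancel: "c \<noteq> 0 \<Longrightarrow> c / 2 * (x / c) = x / (2::real)"
  by simp

lemma gp_convex:
  assumes mo: "mono \<phi>" and cv: "convex_on UNIV \<phi>" and t: "0 \<le> t" "t \<le> 1"
  shows "convex_on {0..1} (\<lambda>s. gp \<phi> s t)"
proof (rule convex_onI)
  fix l s1 s2 :: real
  assume l: "0 < l" "l < 1" and s1: "s1 \<in> {0..1}" and s2: "s2 \<in> {0..1}"
  define s where "s = (1 - l) *\<^sub>R s1 + l *\<^sub>R s2"
  have s_eq: "s = (1 - l) * s1 + l * s2" unfolding s_def by simp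
  have A: "P \<phi> \<bar>s + t\<bar> (1 + s * t) \<le> (1 - l) * P \<phi> \<bar>s1 + t\<bar> (1 + s1 * t) + l * P \<phi> \<bar>s2 + t\<bar> (1 + s2 * t)"
  proof -
    have "0 \<le> s" using s1 s2 l by (simp add: s_eq)
    then have "\<bar>s + t\<bar> = (1 - l) * (s1 + t) + l * (s2 + t)"
      using t by (simp add: s_eq algebra_simps)
    then have "\<bar>s + t\<bar> = (1 - l) * \<bar>s1 + t\<bar> + l * \<bar>s2 + t\<bar>"
      using s1 s2 t by simp
    moreover have "1 + s * t = (1 - l) * (1 + s1 * t) + l * (1 + s2 * t)"
      by (simp add: s_eq algebra_simps)
    moreover have "0 < 1 + s1 * t" "0 < 1 + s2 * t" using s1 s2 t by (auto simp: add_pos_nonneg)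
    moreover have "P \<phi> ((1 - l) * \<bar>s1 + t\<bar> + l * \<bar>s2 + t\<bar>) ((1 - l) * (1 + s1 * t) + l * (1 + s2 * t))
        \<le> (1 - l) * P \<phi> \<bar>s1 + t\<bar> (1 + s1 * t) + l * P \<phi> \<bar>s2 + t\<bar> (1 + s2 * t)"
      by (rule P_convex[OF cv]) (use l calculation(3,4) in auto)
    ultimately show ?thesis by simp
  qed
  have B: "P \<phi> \<bar>s - t\<bar> (1 - s * t) \<le> (1 - l) * P \<phi> \<bar>s1 - t\<bar> (1 - s1 * t) + l * P \<phi> \<bar>s2 - t\<bar> (1 - s2 * t)"
  proof -
    have ab: "\<bar>s - t\<bar> \<le> (1 - l) * \<bar>s1 - t\<bar> + l * \<bar>s2 - t\<bar>"
    proof -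
      have "s - t = (1 - l) * (s1 - t) + l * (s2 - t)" by (simp add: s_eq algebra_simps)
      then have "\<bar>s - t\<bar> \<le> \<bar>(1 - l) * (s1 - t)\<bar> + \<bar>l * (s2 - t)\<bar>" by (simp add: abs_triangle_ineq)
      then show ?thesis using l by (simp add: abs_mult)
    qed
    have ye: "1 - s * t = (1 - l) * (1 - s1 * t) + l * (1 - s2 * t)"
      by (simp add: s_eq algebra_simps)
    have y1: "0 \<le> 1 - s1 * t" using s1 t by (simp add: mult_le_one)
    have y2: "0 \<le> 1 - s2 * t" using s2 t by (simp add: mult_le_one)
    have z1: "\<bar>s1 - t\<bar> = 0" if "1 - s1 * t = 0" using prod_eq1[OF _ _ t that] s1 by auto
    have z2: "\<bar>s2 - t\<bar> = 0" if "1 - s2 * t = 0" using prod_eq1[OF _ _ t that] s2 by auto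
    have "0 \<le> 1 - s * t" unfolding ye using y1 y2 l by simp
    then have "P \<phi> \<bar>s - t\<bar> (1 - s * t) \<le> P \<phi> ((1 - l) * \<bar>s1 - t\<bar> + l * \<bar>s2 - t\<bar>) (1 - s * t)"
      using P_mono[OF mo _ ab] by blast
    also have "\<dots> \<le> (1 - l) * P \<phi> \<bar>s1 - t\<bar> (1 - s1 * t) + l * P \<phi> \<bar>s2 - t\<bar> (1 - s2 * t)"
      unfolding ye using P_convex[OF cv, of "1 - l" l "1 - s1 * t" "1 - s2 * t" "\<bar>s1 - t\<bar>" "\<bar>s2 - t\<bar>"] l y1 y2 z1 z2
      by simp
    finally show ?thesis .
  qed
  have E: "(1 - l) * ((P \<phi> \<bar>s1 + t\<bar> (1 + s1 * t) + P \<phi> \<bar>s1 - t\<bar> (1 - s1 * t)) / 2)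
     + l * ((P \<phi> \<bar>s2 + t\<bar> (1 + s2 * t) + P \<phi> \<bar>s2 - t\<bar> (1 - s2 * t)) / 2)
     = (((1 - l) * P \<phi> \<bar>s1 + t\<bar> (1 + s1 * t) + l * P \<phi> \<bar>s2 + t\<bar> (1 + s2 * t))
       + ((1 - l) * P \<phi> \<bar>s1 - t\<bar> (1 - s1 * t) + l * P \<phi> \<bar>s2 - t\<bar> (1 - s2 * t))) / 2"
    by (rule lin_avg)
  show "gp \<phi> ((1 - l) *\<^sub>R s1 + l *\<^sub>R s2) t \<le> (1 - l) * gp \<phi> s1 t + l * gp \<phi> s2 t"
    unfolding s_def[symmetric] gp_def E using A B by (intro divide_right_mono add_mono) simp_all
qed simp

lemma gp_min:
  assumes mo: "mono \<phi>" and cv: "convex_on UNIV \<phi>" and s: "0 \<le> s" "s \<le> 1" and t: "0 \<le> t" "t \<le> 1"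
  shows "gp \<phi> 0 t \<le> gp \<phi> s t"
proof -
  have g0: "gp \<phi> 0 t = \<phi> t" using t by (simp add: gp_def P_def)
  show ?thesis
  proof (cases "1 - s * t = 0")
    case True
    then have "s = 1" "t = 1" using prod_eq1[OF s t True] by auto
    then show ?thesis by (simp add: gp_def P_def)
  next
    case False
    have B: "0 < 1 - s * t" using False s t by (smt (verit) mult_le_one)
    have A: "0 < 1 + s * t" using s t by (smt (verit) mult_nonneg_nonneg)
    define a where "a = (1 + s * t) / 2"
    define b where "b = (1 - s * t) / 2"
    have ab: "0 \<le> a" "0 \<le> b" "a + b = 1" using A B unfolding a_def b_def by (auto simp: field_simps)
    have "\<phi> (a * (\<bar>s + t\<bar> / (1 + s * t)) + b * (\<bar>s - t\<bar> / (1 - s * t)))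
        \<le> a * \<phi> (\<bar>s + t\<bar> / (1 + s * t)) + b * \<phi> (\<bar>s - t\<bar> / (1 - s * t))"
    proof -
      have "a = 1 - b" using ab by simp
      then show ?thesis
        using convex_onD[OF cv, of b "\<bar>s + t\<bar> / (1 + s * t)" "\<bar>s - t\<bar> / (1 - s * t)"] ab
        by (simp only: scaleR_conv_of_real of_real_def[symmetric]) simp
    qed
    also have "\<dots> = gp \<phi> s t" unfolding gp_def P_def a_def b_def by (simp add: field_simps)
    finally have 1: "\<phi> (a * (\<bar>s + t\<bar> / (1 + s * t)) + b * (\<bar>s - t\<bar> / (1 - s * t))) \<le> gp \<phi> s t" .
    have "a * (\<bar>s + t\<bar> / (1 + s * t)) + b * (\<bar>s - t\<bar> / (1 - s * t)) = (\<bar>s + t\<bar> + \<bar>s - t\<bar>) / 2"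
    proof -
      have "(1 + s * t) / 2 * (\<bar>s + t\<bar> / (1 + s * t)) = \<bar>s + t\<bar> / 2" using A by (intro half_cancel) simp
      moreover have "(1 - s * t) / 2 * (\<bar>s - t\<bar> / (1 - s * t)) = \<bar>s - t\<bar> / 2" using B by (intro half_cancel) simp
      ultimately show ?thesis unfolding a_def b_def by simp
    qed
    moreover have "t \<le> (\<bar>s + t\<bar> + \<bar>s - t\<bar>) / 2" using s t by (simp add: abs_if)
    ultimately have "t \<le> a * (\<bar>s + t\<bar> / (1 + s * t)) + b * (\<bar>s - t\<bar> / (1 - s * t))"
      by linarith
    then have "\<phi> t \<le> \<phi> (a * (\<bar>s + t\<bar> / (1 + s * t)) + b * (\<bar>s - t\<bar> / (1 - s * t)))"
      using mo by (rule monoD[rotated])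
    with 1 g0 show ?thesis by simp
  qed
qed

lemma convex_min_mono:
  fixes h :: "real \<Rightarrow> real"
  assumes cv: "convex_on {0..1} h" and mn: "\<And>s. s \<in> {0..1} \<Longrightarrow> h 0 \<le> h s"
  shows "mono_on {0..1} h"
proof (rule mono_onI)
  fix x y :: real assume x: "x \<in> {0..1}" and y: "y \<in> {0..1}" and xy: "x \<le> y"
  show "h x \<le> h y"
  proof (cases "y = 0")
    case True then show ?thesis using x xy by simp
  next
    case False
    then have yp: "y > 0" using y by auto
    define l where "l = x / y"
    have l: "0 \<le> l" "l \<le> 1" using x xy yp by (auto simp: l_def)
    have "x = (1 - l) *\<^sub>R 0 + l *\<^sub>R y" using yp by (simp add: l_def)
    then have "h x \<le> (1 - l) * h 0 + l * h y"
      using convex_onD[OF cv l, of 0 y] y by simp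
    also have "\<dots> \<le> (1 - l) * h y + l * h y"
      using mn[OF y] l by (simp add: mult_left_mono)
    finally show ?thesis by (simp add: algebra_simps)
  qed
qed

lemma gp_sym: "gp \<phi> s t = gp \<phi> t s"
  unfolding gp_def by (simp add: abs_minus_commute add.commute mult.commute)

lemma gp_props:
  assumes mo: "mono \<phi>" and cv: "convex_on UNIV \<phi>" and t: "t \<in> {0..1}"
  shows "convex_on {0..1} (\<lambda>s. gp \<phi> s t) \<and> mono_on {0..1} (\<lambda>s. gp \<phi> s t)"
  using gp_convex[OF mo cv] gp_min[OF mo cv] t
  by (auto intro!: convex_min_mono)



lemma gen1: "(A::real) \<noteq> 0 \<Longrightarrow> B \<noteq> 0 \<Longrightarrow> 1 + (p/A) * (q/B) = (A*B + p*q) / (A*B)"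
  by (simp add: field_simps)
lemma gen2: "(A::real) \<noteq> 0 \<Longrightarrow> B \<noteq> 0 \<Longrightarrow> p/A + q/B = (p*B + q*A) / (A*B)"
  by (simp add: field_simps)
lemma hc: "(1/2 * x - 1/2 * y) / (1/2 * x + 1/2 * y) = ((x::real) - y) / (x + y)"
proof -
  have "1/2 * x - 1/2 * y = (1/2)*(x-y)" "1/2*x+1/2*y = (1/2)*(x+y)" by algebra+
  then show ?thesis by (simp only: mult_divide_mult_cancel_left_if) simp
qed

lemma plus_term:
  fixes a0 a1 b0 b1 :: real
  assumes "0 \<le> a0" "0 \<le> a1" "0 \<le> b0" "0 \<le> b1"
  shows "(a0*b0 + a1*b1)/4 * \<phi> (\<bar>a0*b0 - a1*b1\<bar> / (a0*b0 + a1*b1))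
    = ((a0+a1)/2) * ((b0+b1)/2) * (P \<phi> \<bar>(a0-a1)/(a0+a1) + (b0-b1)/(b0+b1)\<bar> (1 + (a0-a1)/(a0+a1) * ((b0-b1)/(b0+b1)))) / 2"
proof (cases "a0 + a1 = 0 \<or> b0 + b1 = 0")
  case True
  then have "a0 = 0 \<and> a1 = 0 \<or> b0 = 0 \<and> b1 = 0" using assms by linarith
  then show ?thesis by auto
next
  case False
  define S1 where "S1 = a0 + a1"
  define S2 where "S2 = b0 + b1"
  define N where "N = a0*b0 + a1*b1"
  define M where "M = a0*b0 - a1*b1"
  have S: "S1 > 0" "S2 > 0" using False assms by (auto simp: S1_def S2_def)
  have e1: "1 + (a0-a1)/(a0+a1) * ((b0-b1)/(b0+b1)) = 2 * N / (S1 * S2)"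
  proof -
    have "S1 * S2 + (a0-a1)*(b0-b1) = 2 * N" unfolding S1_def S2_def N_def by algebra
    then show ?thesis using gen1[of S1 S2 "a0-a1" "b0-b1"] S unfolding S1_def S2_def by simp
  qed
  have e2: "(a0-a1)/(a0+a1) + (b0-b1)/(b0+b1) = 2 * M / (S1 * S2)"
  proof -
    have "(a0-a1)*S2 + (b0-b1)*S1 = 2 * M" unfolding S1_def S2_def M_def by algebra
    then show ?thesis using gen2[of S1 S2 "a0-a1" "b0-b1"] S unfolding S1_def S2_def by simp
  qed
  have e3: "\<bar>2 * M / (S1 * S2)\<bar> / (2 * N / (S1 * S2)) = \<bar>M\<bar> / N"
    using S by (simp add: abs_divide abs_mult)
  have "((a0+a1)/2) * ((b0+b1)/2) * (P \<phi> \<bar>(a0-a1)/(a0+a1) + (b0-b1)/(b0+b1)\<bar> (1 + (a0-a1)/(a0+a1) * ((b0-b1)/(b0+b1)))) / 2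
      = (S1/2) * (S2/2) * ((2 * N / (S1 * S2)) * \<phi> (\<bar>M\<bar> / N)) / 2"
    unfolding e1 e2 P_def e3 by (simp add: S1_def S2_def)
  also have "\<dots> = N / 4 * \<phi> (\<bar>M\<bar> / N)" using S by (simp add: field_simps)
  finally show ?thesis unfolding N_def M_def by simp
qed

lemma gp_abs: "gp \<phi> x y = gp \<phi> \<bar>x\<bar> \<bar>y\<bar>"
proof (cases "0 \<le> x * y")
  case True
  then have "\<bar>x\<bar> * \<bar>y\<bar> = x * y" by (simp add: abs_mult[symmetric])
  moreover have "\<bar>\<bar>x\<bar> + \<bar>y\<bar>\<bar> = \<bar>x + y\<bar>" "\<bar>\<bar>x\<bar> - \<bar>y\<bar>\<bar> = \<bar>x - y\<bar>"
    using True by (auto simp: abs_if zero_le_mult_iff)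
  ultimately show ?thesis unfolding gp_def by simp
next
  case False
  then have "\<bar>x\<bar> * \<bar>y\<bar> = - (x * y)" by (simp add: abs_mult[symmetric])
  moreover have "\<bar>\<bar>x\<bar> + \<bar>y\<bar>\<bar> = \<bar>x - y\<bar>" "\<bar>\<bar>x\<bar> - \<bar>y\<bar>\<bar> = \<bar>x + y\<bar>"
    using False by (auto simp: abs_if zero_le_mult_iff)
  ultimately show ?thesis unfolding gp_def by simp
qed

lemma combine: "c * P \<phi> \<bar>d1 + d2\<bar> (1 + d1 * d2) / 2 + c * P \<phi> \<bar>- d1 + d2\<bar> (1 + - d1 * d2) / 2 = c * gp \<phi> d1 d2"
  unfolding gp_def by (simp add: abs_minus_commute add_divide_distrib algebra_simps)

lemma sum_prod_UNIV: "(\<Sum>z\<in>UNIV. f z) = (\<Sum>a\<in>UNIV. \<Sum>b\<in>UNIV. f (a, b))"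
  for f :: "'a::finite \<times> 'b::finite \<Rightarrow> real"
  by (simp add: sum.cartesian_product flip: UNIV_Times_UNIV)

lemma plus_formula:
  fixes W :: "bool \<Rightarrow> 'y::finite \<Rightarrow> real"
  assumes W: "bdmc W"
  shows "exp_absDelta (chan_plus W) \<phi> =
    (\<Sum>y1\<in>UNIV. \<Sum>y2\<in>UNIV. qW W y1 * qW W y2 * gp \<phi> \<bar>DeltaW W y1\<bar> \<bar>DeltaW W y2\<bar>)"
proof -
  have pair: "(\<Sum>u\<in>UNIV. qW (chan_plus W) ((y1, y2), u) * \<phi> \<bar>DeltaW (chan_plus W) ((y1, y2), u)\<bar>)
      = qW W y1 * qW W y2 * gp \<phi> \<bar>DeltaW W y1\<bar> \<bar>DeltaW W y2\<bar>" for y1 y2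
  proof -
    define a0 where "a0 = W False y1"
    define a1 where "a1 = W True y1"
    define b0 where "b0 = W False y2"
    define b1 where "b1 = W True y2"
    have nn: "0 \<le> a0" "0 \<le> a1" "0 \<le> b0" "0 \<le> b1"
      using W by (auto simp: a0_def a1_def b0_def b1_def bdmc_nonneg)
    have qF: "qW (chan_plus W) ((y1, y2), False) = (a0*b0 + a1*b1)/4"
      by (simp add: qW_def chan_plus_def a0_def a1_def b0_def b1_def)
    have dF: "DeltaW (chan_plus W) ((y1, y2), False) = (a0*b0 - a1*b1)/(a0*b0 + a1*b1)"
      unfolding DeltaW_def chan_plus_def a0_def a1_def b0_def b1_def
      using hc by (simp add: mult.assoc)
    have qT: "qW (chan_plus W) ((y1, y2), True) = (a1*b0 + a0*b1)/4"
      by (simp add: qW_def chan_plus_def a0_def a1_def b0_def b1_def)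
    have dT: "DeltaW (chan_plus W) ((y1, y2), True) = (a1*b0 - a0*b1)/(a1*b0 + a0*b1)"
      unfolding DeltaW_def chan_plus_def a0_def a1_def b0_def b1_def
      using hc by (simp add: mult.assoc)
    have neg: "(a1 - a0)/(a1 + a0) = - ((a0 - a1)/(a0 + a1))"
      by (simp add: add.commute minus_divide_left)
    have "(\<Sum>u\<in>UNIV. qW (chan_plus W) ((y1, y2), u) * \<phi> \<bar>DeltaW (chan_plus W) ((y1, y2), u)\<bar>)
       = (a0*b0 + a1*b1)/4 * \<phi> (\<bar>a0*b0 - a1*b1\<bar> / (a0*b0 + a1*b1))
         + (a1*b0 + a0*b1)/4 * \<phi> (\<bar>a1*b0 - a0*b1\<bar> / (a1*b0 + a0*b1))"
    proof -
      have "\<bar>a0*b0 + a1*b1\<bar> = a0*b0 + a1*b1" "\<bar>a1*b0 + a0*b1\<bar> = a1*b0 + a0*b1"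
        using nn by auto
      then show ?thesis unfolding UNIV_bool by (simp add: qF dF qT dT abs_divide)
    qed
    also have "\<dots> = ((a0+a1)/2) * ((b0+b1)/2) * P \<phi> \<bar>(a0-a1)/(a0+a1) + (b0-b1)/(b0+b1)\<bar> (1 + (a0-a1)/(a0+a1) * ((b0-b1)/(b0+b1))) / 2
       + ((a0+a1)/2) * ((b0+b1)/2) * P \<phi> \<bar>- ((a0-a1)/(a0+a1)) + (b0-b1)/(b0+b1)\<bar> (1 + - ((a0-a1)/(a0+a1)) * ((b0-b1)/(b0+b1))) / 2"
      unfolding plus_term[OF nn] plus_term[OF nn(2,1,3,4)] neg by (simp only: add.commute[of a1 a0])
    also have "\<dots> = ((a0+a1)/2) * ((b0+b1)/2) * gp \<phi> ((a0-a1)/(a0+a1)) ((b0-b1)/(b0+b1))"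
      by (rule combine)
    also have "\<dots> = qW W y1 * qW W y2 * gp \<phi> (DeltaW W y1) (DeltaW W y2)"
      by (simp only: qW_def DeltaW_def a0_def a1_def b0_def b1_def)
    also have "\<dots> = qW W y1 * qW W y2 * gp \<phi> \<bar>DeltaW W y1\<bar> \<bar>DeltaW W y2\<bar>"
      by (subst gp_abs) (rule refl)
    finally show ?thesis .
  qed
  show ?thesis unfolding exp_absDelta_def
    by (subst sum_prod_UNIV, subst sum_prod_UNIV) (simp add: pair)
qed



lemma scale_props:
  assumes mo: "mono \<phi>" and cv: "convex_on UNIV \<phi>" and t: "t \<in> {0..1::real}"
  shows "convex_on {0..1} (\<lambda>s. \<phi> (s * t)) \<and> mono_on {0..1} (\<lambda>s. \<phi> (s * t))"
proof
  show "convex_on {0..1} (\<lambda>s. \<phi> (s * t))"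
  proof (rule convex_onI)
    fix l x y :: real assume l: "0 < l" "l < 1"
    have "((1 - l) *\<^sub>R x + l *\<^sub>R y) * t = (1 - l) *\<^sub>R (x * t) + l *\<^sub>R (y * t)"
      by (simp add: algebra_simps)
    then show "\<phi> (((1 - l) *\<^sub>R x + l *\<^sub>R y) * t) \<le> (1 - l) * \<phi> (x * t) + l * \<phi> (y * t)"
      using convex_onD[OF cv, of l "x * t" "y * t"] l by simp
  qed simp
  show "mono_on {0..1} (\<lambda>s. \<phi> (s * t))"
    using t by (auto intro!: mono_onI monoD[OF mo] mult_right_mono)
qed

theorem theorem1:
  fixes W :: "bool \<Rightarrow> 'y::finite \<Rightarrow> real" and V :: "bool \<Rightarrow> 'z::finite \<Rightarrow> real"
  assumes "bdmc W" and "bdmc V" and "absDelta_icx V W"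
  shows "absDelta_icx (chan_minus V) (chan_minus W) \<and> absDelta_icx (chan_plus V) (chan_plus W)"
proof
  show "absDelta_icx (chan_minus V) (chan_minus W)"
    unfolding absDelta_icx_def
  proof (intro allI impI)
    fix \<phi> :: "real \<Rightarrow> real" assume \<phi>: "mono \<phi> \<and> convex_on UNIV \<phi>"
    show "exp_absDelta (chan_minus V) \<phi> \<le> exp_absDelta (chan_minus W) \<phi>"
      unfolding minus_formula
      by (rule icx_prod[OF assms, of "\<lambda>s t. \<phi> (s * t)"])
         (use scale_props[of \<phi>] \<phi> in \<open>auto simp: mult.commute\<close>)
  qed
  show "absDelta_icx (chan_plus V) (chan_plus W)"
    unfolding absDelta_icx_def
  proof (intro allI impI)
    fix \<phi> :: "real \<Rightarrow> real" assume \<phi>: "mono \<phi> \<and> convex_on UNIV \<phi>"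
    show "exp_absDelta (chan_plus V) \<phi> \<le> exp_absDelta (chan_plus W) \<phi>"
      unfolding plus_formula[OF assms(1)] plus_formula[OF assms(2)]
      by (rule icx_prod[OF assms, of "gp \<phi>"])
         (use gp_props[of \<phi>] \<phi> in \<open>auto simp: gp_sym[of \<phi> _]\<close>)
  qed
qed


end
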